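(* For every $k\ge1$ and every smooth periodic function $y$, with $Y=\mathrm{diag}(y(x_0),\dots,y(x_{N-1}))$, the commutator $[D_k,Y]=D_kY-YD_k$ has height at most $k-1$, i.e. $\mathrm{ht}([D_k,Y])\le k-1$.
   Context: Uniform periodic grid $x_j=a+(b-a)\frac jN$, $j=0,\dots,N-1$. $D_F=N\cdot M$ where $M$ is the $N\times N$ circulant matrix with $-1$ on the diagonal, $1$ on the superdiagonal and $1$ in the bottom-left corner (so $(D_Fu)_j=N(u_{j+1}-u_j)$ with periodic indices); $D_B=-D_F^\dagger$; $D_2=D_BD_F=D_FD_B$ ($N^2$ times the periodic circulant with $-2$ on the diagonal and $1$ on both off-diagonals). Higher differences: $D_k=D_2^{k/2}$ for $k$ even and $D_k=D_FD_2^{(k-1)/2}$ for $k$ odd. An $N\times N$ matrix (family indexed by $N$) $P$ has height $m$ if $m$ is the highest order such that $\|P\|_2$ grows as $N^m$ as $N\to\infty$; thus $\mathrm{ht}(P)\le m$ means $\|P\|_2=O(N^m)$ as $N\to\infty$. *)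

theory Defs
  imports "HOL-Analysis.Analysis" "HOL-Library.Landau_Symbols" "Jordan_Normal_Form.Matrix"
begin

definition smooth_fun :: "(real \<Rightarrow> real) \<Rightarrow> bool" where
  "smooth_fun y \<longleftrightarrow> (\<forall>n x. ((deriv ^^ n) y) differentiable (at x))"

definition periodic_fun :: "real \<Rightarrow> (real \<Rightarrow> real) \<Rightarrow> bool" where
  "periodic_fun p y \<longleftrightarrow> (\<forall>x. y (x + p) = y x)"

definition grid_pt :: "real \<Rightarrow> real \<Rightarrow> nat \<Rightarrow> nat \<Rightarrow> real" where
  "grid_pt a b N j = a + (b - a) * real j / real N"

text \<open>Forward difference D_F = N * M, M circulant: -1 on diagonal, 1 on superdiagonal
  and in the bottom-left corner, i.e. (D_F u)_j = N (u_{j+1} - u_j), indices mod N.\<close>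
definition DF :: "nat \<Rightarrow> real mat" where
  "DF N = real N \<cdot>\<^sub>m mat N N (\<lambda>(i,j). (if j = (i + 1) mod N then 1 else 0) - (if i = j then 1 else 0))"

definition DB :: "nat \<Rightarrow> real mat" where
  "DB N = - (transpose_mat (DF N))"

definition D2 :: "nat \<Rightarrow> real mat" where
  "D2 N = DB N * DF N"

definition Dk :: "nat \<Rightarrow> nat \<Rightarrow> real mat" where
  "Dk k N = (if even k then D2 N ^\<^sub>m (k div 2) else DF N * D2 N ^\<^sub>m ((k - 1) div 2))"

definition grid_diag :: "(real \<Rightarrow> real) \<Rightarrow> real \<Rightarrow> real \<Rightarrow> nat \<Rightarrow> real mat" where
  "grid_diag y a b N = mat N N (\<lambda>(i,j). if i = j then y (grid_pt a b N i) else 0)"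

definition vnorm2 :: "real vec \<Rightarrow> real" where
  "vnorm2 v = sqrt (\<Sum>i<dim_vec v. (v $ i)\<^sup>2)"

definition opnorm2 :: "real mat \<Rightarrow> real" where
  "opnorm2 A = Sup {vnorm2 (A *\<^sub>v v) | v. dim_vec v = dim_col A \<and> vnorm2 v \<le> 1}"

definition height_le :: "(nat \<Rightarrow> real mat) \<Rightarrow> nat \<Rightarrow> bool" where
  "height_le P m \<longleftrightarrow> (\<lambda>N. opnorm2 (P N)) \<in> O(\<lambda>N. real N ^ m)"

end

theory Submission
  imports Defs
begin

lemma vnorm2_L2: "vnorm2 v = L2_set (\<lambda>i. v $ i) {..<dim_vec v}"
  unfolding vnorm2_def L2_set_def by simp

lemma vnorm2_nonneg: "0 \<le> vnorm2 v"
  unfolding vnorm2_def by (simp add: sum_nonneg)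

lemma vnorm2_add: assumes "dim_vec u = dim_vec w" shows "vnorm2 (u + w) \<le> vnorm2 u + vnorm2 w"
proof -
  have "vnorm2 (u + w) = L2_set (\<lambda>i. u $ i + w $ i) {..<dim_vec w}"
    unfolding vnorm2_L2 using assms by (intro L2_set_cong) auto
  also have "\<dots> \<le> L2_set (\<lambda>i. u $ i) {..<dim_vec w} + L2_set (\<lambda>i. w $ i) {..<dim_vec w}"
    by (rule L2_set_triangle_ineq)
  finally show ?thesis unfolding vnorm2_L2 using assms by simp
qed

lemma vnorm2_minus: assumes "dim_vec u = dim_vec w" shows "vnorm2 (u - w) \<le> vnorm2 u + vnorm2 w"
proof -
  have "vnorm2 (u - w) = L2_set (\<lambda>i. u $ i + (- w $ i)) {..<dim_vec w}"
    unfolding vnorm2_L2 using assms by (intro L2_set_cong) auto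
  also have "\<dots> \<le> L2_set (\<lambda>i. u $ i) {..<dim_vec w} + L2_set (\<lambda>i. - w $ i) {..<dim_vec w}"
    by (rule L2_set_triangle_ineq)
  also have "L2_set (\<lambda>i. - w $ i) {..<dim_vec w} = L2_set (\<lambda>i. w $ i) {..<dim_vec w}"
    unfolding L2_set_def by simp
  finally show ?thesis unfolding vnorm2_L2 using assms by simp
qed

lemma vnorm2_smult: "vnorm2 (c \<cdot>\<^sub>v u) = \<bar>c\<bar> * vnorm2 u"
proof -
  have "vnorm2 (c \<cdot>\<^sub>v u) = L2_set (\<lambda>i. \<bar>c\<bar> * u $ i) {..<dim_vec u}"
    unfolding vnorm2_L2 L2_set_def by (intro arg_cong[where f=sqrt] sum.cong) (auto simp: power_mult_distrib)
  also have "\<dots> = \<bar>c\<bar> * vnorm2 u" unfolding vnorm2_L2 by (simp add: L2_set_right_distrib)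
  finally show ?thesis .
qed

lemma vnorm2_zero[simp]: "vnorm2 (0\<^sub>v n) = 0"
  unfolding vnorm2_def by simp

definition opb :: "real mat \<Rightarrow> real \<Rightarrow> bool" where
  "opb A c \<longleftrightarrow> (\<forall>v. dim_vec v = dim_col A \<longrightarrow> vnorm2 (A *\<^sub>v v) \<le> c * vnorm2 v)"

lemma opnorm2_le: assumes "opb A c" "0 \<le> c" shows "opnorm2 A \<le> c"
  unfolding opnorm2_def
proof (rule cSup_least)
  show "{vnorm2 (A *\<^sub>v v) |v. dim_vec v = dim_col A \<and> vnorm2 v \<le> 1} \<noteq> {}"
  proof -
    have "vnorm2 (A *\<^sub>v 0\<^sub>v (dim_col A)) \<in> {vnorm2 (A *\<^sub>v v) |v. dim_vec v = dim_col A \<and> vnorm2 v \<le> 1}"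
      by force
    then show ?thesis by blast
  qed
next
  fix x assume "x \<in> {vnorm2 (A *\<^sub>v v) |v. dim_vec v = dim_col A \<and> vnorm2 v \<le> 1}"
  then obtain v where v: "dim_vec v = dim_col A" "vnorm2 v \<le> 1" "x = vnorm2 (A *\<^sub>v v)" by auto
  have "x \<le> c * vnorm2 v" using assms(1) v unfolding opb_def by auto
  also have "\<dots> \<le> c" using v(2) assms(2) by (simp add: mult_left_le)
  finally show "x \<le> c" .
qed

lemma opnorm2_nonneg: assumes "opb A c" "0 \<le> c" shows "0 \<le> opnorm2 A"
  unfolding opnorm2_def
proof (rule cSup_upper2)
  show "vnorm2 (A *\<^sub>v 0\<^sub>v (dim_col A)) \<in> {vnorm2 (A *\<^sub>v v) |v. dim_vec v = dim_col A \<and> vnorm2 v \<le> 1}"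
    by force
  show "0 \<le> vnorm2 (A *\<^sub>v 0\<^sub>v (dim_col A))" by (rule vnorm2_nonneg)
  show "bdd_above {vnorm2 (A *\<^sub>v v) |v. dim_vec v = dim_col A \<and> vnorm2 v \<le> 1}"
  proof (rule bdd_aboveI)
    fix x assume "x \<in> {vnorm2 (A *\<^sub>v v) |v. dim_vec v = dim_col A \<and> vnorm2 v \<le> 1}"
    then obtain v where v: "dim_vec v = dim_col A" "vnorm2 v \<le> 1" "x = vnorm2 (A *\<^sub>v v)" by auto
    have "x \<le> c * vnorm2 v" using assms(1) v unfolding opb_def by auto
    also have "\<dots> \<le> c" using v(2) assms(2) by (simp add: mult_left_le)
    finally show "x \<le> c" .
  qed
qed

lemma opbD: "opb A c \<Longrightarrow> dim_vec v = dim_col A \<Longrightarrow> vnorm2 (A *\<^sub>v v) \<le> c * vnorm2 v"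
  unfolding opb_def by blast

lemma opb_mult: assumes A: "A \<in> carrier_mat n n" and B: "B \<in> carrier_mat n n"
  and "opb A c" "opb B d" "0 \<le> c" shows "opb (A * B) (c * d)"
  unfolding opb_def
proof (intro allI impI)
  fix v :: "real vec" assume v: "dim_vec v = dim_col (A * B)"
  then have vc: "v \<in> carrier_vec n" using B by (intro carrier_vecI) simp
  have "vnorm2 ((A * B) *\<^sub>v v) = vnorm2 (A *\<^sub>v (B *\<^sub>v v))" using assoc_mult_mat_vec[OF A B vc] by simp
  also have "\<dots> \<le> c * vnorm2 (B *\<^sub>v v)" by (rule opbD[OF assms(3)]) (use A B in simp)
  also have "\<dots> \<le> c * (d * vnorm2 v)"
    by (intro mult_left_mono opbD[OF assms(4)] assms(5)) (use B vc in simp)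
  finally show "vnorm2 ((A * B) *\<^sub>v v) \<le> c * d * vnorm2 v" by simp
qed

lemma opb_add: assumes A: "A \<in> carrier_mat n n" and B: "B \<in> carrier_mat n n"
  and "opb A c" "opb B d" shows "opb (A + B) (c + d)"
  unfolding opb_def
proof (intro allI impI)
  fix v :: "real vec" assume v: "dim_vec v = dim_col (A + B)"
  then have vc: "v \<in> carrier_vec n" using B by (intro carrier_vecI) simp
  have "vnorm2 ((A + B) *\<^sub>v v) = vnorm2 (A *\<^sub>v v + B *\<^sub>v v)" using add_mult_distrib_mat_vec[OF A B vc] by simp
  also have "\<dots> \<le> vnorm2 (A *\<^sub>v v) + vnorm2 (B *\<^sub>v v)" using A B by (intro vnorm2_add) simp
  also have "\<dots> \<le> c * vnorm2 v + d * vnorm2 v"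
    by (intro add_mono opbD[OF assms(3)] opbD[OF assms(4)]) (use A B vc in simp_all)
  finally show "vnorm2 ((A + B) *\<^sub>v v) \<le> (c + d) * vnorm2 v" by (simp add: algebra_simps)
qed

lemma opb_minus: assumes A: "A \<in> carrier_mat n n" and B: "B \<in> carrier_mat n n"
  and "opb A c" "opb B d" shows "opb (A - B) (c + d)"
  unfolding opb_def
proof (intro allI impI)
  fix v :: "real vec" assume v: "dim_vec v = dim_col (A - B)"
  then have vc: "v \<in> carrier_vec n" using B by (intro carrier_vecI) simp
  have "vnorm2 ((A - B) *\<^sub>v v) = vnorm2 (A *\<^sub>v v - B *\<^sub>v v)" using minus_mult_distrib_mat_vec[OF A B vc] by simp
  also have "\<dots> \<le> vnorm2 (A *\<^sub>v v) + vnorm2 (B *\<^sub>v v)" using A B by (intro vnorm2_minus) simp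
  also have "\<dots> \<le> c * vnorm2 v + d * vnorm2 v"
    by (intro add_mono opbD[OF assms(3)] opbD[OF assms(4)]) (use A B vc in simp_all)
  finally show "vnorm2 ((A - B) *\<^sub>v v) \<le> (c + d) * vnorm2 v" by (simp add: algebra_simps)
qed

lemma opb_smult: assumes "opb A d" shows "opb (c \<cdot>\<^sub>m A) (\<bar>c\<bar> * d)"
  unfolding opb_def
proof (intro allI impI)
  fix v :: "real vec" assume v: "dim_vec v = dim_col (c \<cdot>\<^sub>m A)"
  have "(c \<cdot>\<^sub>m A) *\<^sub>v v = c \<cdot>\<^sub>v (A *\<^sub>v v)"
  proof (rule eq_vecI)
    fix i assume i: "i < dim_vec (c \<cdot>\<^sub>v (A *\<^sub>v v))"
    then have i': "i < dim_row A" by simp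
    have "((c \<cdot>\<^sub>m A) *\<^sub>v v) $ i = (c \<cdot>\<^sub>v row A i) \<bullet> v" using i' by simp
    also have "\<dots> = c * (row A i \<bullet> v)"
      by (rule smult_scalar_prod_distrib[of _ "dim_col A"]) (use v in \<open>auto intro: carrier_vecI\<close>)
    finally show "((c \<cdot>\<^sub>m A) *\<^sub>v v) $ i = (c \<cdot>\<^sub>v (A *\<^sub>v v)) $ i" using i' by simp
  qed simp
  then have "vnorm2 ((c \<cdot>\<^sub>m A) *\<^sub>v v) = \<bar>c\<bar> * vnorm2 (A *\<^sub>v v)" by (simp add: vnorm2_smult)
  also have "\<dots> \<le> \<bar>c\<bar> * (d * vnorm2 v)" using assms v unfolding opb_def by (intro mult_left_mono) auto
  finally show "vnorm2 ((c \<cdot>\<^sub>m A) *\<^sub>v v) \<le> \<bar>c\<bar> * d * vnorm2 v" by simp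
qed


lemma opb_mono: "opb A c \<Longrightarrow> c \<le> d \<Longrightarrow> opb A d"
  unfolding opb_def by (meson mult_right_mono order_trans vnorm2_nonneg)

lemma perm_opb:
  fixes A :: "real mat"
  assumes A: "A \<in> carrier_mat n n" and sig: "bij_betw \<sigma> {..<n} {..<n}"
    and supp: "\<And>i j. i < n \<Longrightarrow> j < n \<Longrightarrow> j \<noteq> \<sigma> i \<Longrightarrow> A $$ (i,j) = 0"
    and bnd: "\<And>i. i < n \<Longrightarrow> \<bar>A $$ (i, \<sigma> i)\<bar> \<le> c" and c: "0 \<le> c"
  shows "opb A c"
  unfolding opb_def
proof (intro allI impI)
  fix v :: "real vec" assume v: "dim_vec v = dim_col A"
  then have dv: "dim_vec v = n" using A by simp
  have si: "\<sigma> i < n" if "i < n" for i using sig that by (auto simp: bij_betw_def)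
  have entry: "(A *\<^sub>v v) $ i = A $$ (i, \<sigma> i) * v $ (\<sigma> i)" if i: "i < n" for i
  proof -
    have "(A *\<^sub>v v) $ i = (\<Sum>j\<in>{0..<n}. A $$ (i,j) * v $ j)"
      using A i dv by (simp add: scalar_prod_def)
    also have "\<dots> = (\<Sum>j\<in>{0..<n}. if j = \<sigma> i then A $$ (i, \<sigma> i) * v $ (\<sigma> i) else 0)"
      by (rule sum.cong) (use supp i in auto)
    also have "\<dots> = A $$ (i, \<sigma> i) * v $ (\<sigma> i)" using si[OF i] by simp
    finally show ?thesis .
  qed
  have "(\<Sum>i<n. ((A *\<^sub>v v) $ i)\<^sup>2) = (\<Sum>i<n. (A $$ (i, \<sigma> i))\<^sup>2 * (v $ (\<sigma> i))\<^sup>2)"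
    by (rule sum.cong) (auto simp: entry power_mult_distrib)
  also have "\<dots> \<le> (\<Sum>i<n. c\<^sup>2 * (v $ (\<sigma> i))\<^sup>2)"
  proof (rule sum_mono)
    fix i assume "i \<in> {..<n}"
    then have "(A $$ (i, \<sigma> i))\<^sup>2 \<le> c\<^sup>2" using bnd[of i] c
      by (metis abs_le_square_iff abs_of_nonneg lessThan_iff)
    then show "(A $$ (i, \<sigma> i))\<^sup>2 * (v $ (\<sigma> i))\<^sup>2 \<le> c\<^sup>2 * (v $ (\<sigma> i))\<^sup>2"
      by (intro mult_right_mono) auto
  qed
  also have "\<dots> = c\<^sup>2 * (\<Sum>i<n. (v $ (\<sigma> i))\<^sup>2)" by (simp add: sum_distrib_left)
  also have "(\<Sum>i<n. (v $ (\<sigma> i))\<^sup>2) = (\<Sum>j<n. (v $ j)\<^sup>2)"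
    using sum.reindex_bij_betw[OF sig, of "\<lambda>j. (v $ j)\<^sup>2"] by simp
  finally have le: "(\<Sum>i<n. ((A *\<^sub>v v) $ i)\<^sup>2) \<le> c\<^sup>2 * (\<Sum>j<n. (v $ j)\<^sup>2)" .
  have "vnorm2 (A *\<^sub>v v) = sqrt (\<Sum>i<n. ((A *\<^sub>v v) $ i)\<^sup>2)" unfolding vnorm2_def using A by simp
  also have "\<dots> \<le> sqrt (c\<^sup>2 * (\<Sum>j<n. (v $ j)\<^sup>2))" using le by simp
  also have "\<dots> = c * vnorm2 v" unfolding vnorm2_def dv using c by (simp add: real_sqrt_mult)
  finally show "vnorm2 (A *\<^sub>v v) \<le> c * vnorm2 v" .
qed

definition comm :: "real mat \<Rightarrow> real mat \<Rightarrow> real mat" where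
  "comm A Y = A * Y - Y * A"

lemma comm_mult:
  assumes A: "A \<in> carrier_mat n n" and B: "B \<in> carrier_mat n n" and Y: "Y \<in> carrier_mat n n"
  shows "comm (A * B) Y = A * comm B Y + comm A Y * B"
proof -
  have 1: "A * (B * Y - Y * B) = A * (B * Y) - A * (Y * B)"
    by (rule mult_minus_distrib_mat[OF A]) (use B Y in auto)
  have 2: "(A * Y - Y * A) * B = A * Y * B - Y * A * B"
    by (rule minus_mult_distrib_mat) (use A B Y in auto)
  have 3: "A * (B * Y) = A * B * Y" "A * (Y * B) = A * Y * B" "Y * A * B = Y * (A * B)"
    using A B Y by (auto simp: assoc_mult_mat[of _ n n _ n _ n])
  show ?thesis unfolding comm_def 1 2 3
    by (rule eq_matI) (use A B Y in auto)
qed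

lemma comm_carrier: "A \<in> carrier_mat n n \<Longrightarrow> Y \<in> carrier_mat n n \<Longrightarrow> comm A Y \<in> carrier_mat n n"
  unfolding comm_def by auto

lemma comm_diag:
  assumes A: "A \<in> carrier_mat n n"
  shows "comm A (mat n n (\<lambda>(i,j). if i = j then w i else 0)) = mat n n (\<lambda>(i,j). A $$ (i,j) * (w j - w i))"
proof (rule eq_matI)
  let ?Y = "mat n n (\<lambda>(i,j). if i = j then w i else 0)"
  fix i j assume i: "i < dim_row (mat n n (\<lambda>(i,j). A $$ (i,j) * (w j - w i)))"
    and j: "j < dim_col (mat n n (\<lambda>(i,j). A $$ (i,j) * (w j - w i)))"
  then have i: "i < n" and j: "j < n" by auto
  have 1: "(A * ?Y) $$ (i,j) = A $$ (i,j) * w j"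
  proof -
    have "(A * ?Y) $$ (i,j) = (\<Sum>k\<in>{0..<n}. A $$ (i,k) * ?Y $$ (k,j))"
      using A i j by (simp add: scalar_prod_def)
    also have "\<dots> = (\<Sum>k\<in>{0..<n}. if k = j then A $$ (i,j) * w j else 0)"
      by (rule sum.cong) (use j in auto)
    also have "\<dots> = A $$ (i,j) * w j" using j by simp
    finally show ?thesis .
  qed
  have 2: "(?Y * A) $$ (i,j) = w i * A $$ (i,j)"
  proof -
    have "(?Y * A) $$ (i,j) = (\<Sum>k\<in>{0..<n}. ?Y $$ (i,k) * A $$ (k,j))"
      using A i j by (simp add: scalar_prod_def)
    also have "\<dots> = (\<Sum>k\<in>{0..<n}. if k = i then w i * A $$ (i,j) else 0)"
      by (rule sum.cong) (use i in auto)
    also have "\<dots> = w i * A $$ (i,j)" using i by simp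
    finally show ?thesis .
  qed
  show "comm A ?Y $$ (i,j) = mat n n (\<lambda>(i,j). A $$ (i,j) * (w j - w i)) $$ (i,j)"
    unfolding comm_def using A i j 1 2 by (simp add: algebra_simps)
qed (use A in \<open>auto simp: comm_def\<close>)


definition sg :: "nat \<Rightarrow> nat \<Rightarrow> nat" where "sg n i = (i + 1) mod n"
definition tg :: "nat \<Rightarrow> nat \<Rightarrow> nat" where "tg n i = (i + n - 1) mod n"

lemma sg_lt: "i < n \<Longrightarrow> sg n i < n" unfolding sg_def by simp
lemma tg_lt: "i < n \<Longrightarrow> tg n i < n" unfolding tg_def by simp

lemma tg_sg: assumes "i < n" shows "tg n (sg n i) = i"
proof (cases "i + 1 < n")
  case True
  then have "tg n (sg n i) = (i + n) mod n" unfolding sg_def tg_def by simp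
  then show ?thesis using assms by simp
next
  case False
  then have "i + 1 = n" using assms by simp
  then show ?thesis unfolding sg_def tg_def by simp
qed

lemma sg_tg: assumes "i < n" shows "sg n (tg n i) = i"
proof (cases "i = 0")
  case True
  then show ?thesis using assms unfolding sg_def tg_def by simp
next
  case False
  then have "tg n i = i - 1" unfolding tg_def using assms
    by (metis Nat.add_diff_assoc One_nat_def Suc_leI add.commute le_add_diff_inverse less_imp_diff_less mod_add_self2 mod_less neq0_conv)
  then show ?thesis unfolding sg_def using assms False by simp
qed

lemma bij_sg: "bij_betw (sg n) {..<n} {..<n}"
  by (rule bij_betw_byWitness[where f'="tg n"]) (auto simp: tg_sg sg_tg sg_lt tg_lt)

lemma bij_tg: "bij_betw (tg n) {..<n} {..<n}"
  by (rule bij_betw_byWitness[where f'="sg n"]) (auto simp: tg_sg sg_tg sg_lt tg_lt)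

lemma sg_iff: "i < n \<Longrightarrow> j < n \<Longrightarrow> (i = sg n j) \<longleftrightarrow> (j = tg n i)"
  using tg_sg sg_tg by metis

lemma DF_index: "i < n \<Longrightarrow> j < n \<Longrightarrow> DF n $$ (i,j) = real n * ((if j = sg n i then 1 else 0) - (if i = j then 1 else 0))"
  unfolding DF_def sg_def by simp

lemma dim_DF[simp]: "dim_row (DF n) = n" "dim_col (DF n) = n" unfolding DF_def by simp_all
lemma dim_DB[simp]: "dim_row (DB n) = n" "dim_col (DB n) = n" unfolding DB_def by simp_all
lemma DF_carrier[simp]: "DF n \<in> carrier_mat n n" by (intro carrier_matI) simp_all
lemma DB_carrier[simp]: "DB n \<in> carrier_mat n n" by (intro carrier_matI) simp_all
lemma D2_carrier[simp]: "D2 n \<in> carrier_mat n n" unfolding D2_def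
  by (rule mult_carrier_mat[OF DB_carrier DF_carrier])
lemma dim_D2[simp]: "dim_row (D2 n) = n" "dim_col (D2 n) = n"
  unfolding D2_def by simp_all

lemma DB_index: assumes "i < n" "j < n"
  shows "DB n $$ (i,j) = - (real n * ((if i = sg n j then 1 else 0) - (if i = j then 1 else 0)))"
proof -
  have "DB n $$ (i,j) = - (DF n $$ (j,i))" unfolding DB_def using assms by simp
  then show ?thesis using DF_index[of j n i] assms by auto
qed

lemma opb_one: "opb (1\<^sub>m n) 1"
  by (rule perm_opb[where \<sigma>=id]) auto

lemma opb_DF: "opb (DF n) (2 * real n)"
proof -
  let ?S = "mat n n (\<lambda>(i,j). if j = sg n i then 1 else 0) :: real mat"
  have eq: "DF n = real n \<cdot>\<^sub>m (?S - 1\<^sub>m n)"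
    by (rule eq_matI) (auto simp: DF_index)
  have "opb ?S 1" by (rule perm_opb[OF _ bij_sg]) (auto simp: sg_lt)
  then have "opb (?S - 1\<^sub>m n) (1 + 1)" by (intro opb_minus[of _ n] opb_one) auto
  then have "opb (real n \<cdot>\<^sub>m (?S - 1\<^sub>m n)) (\<bar>real n\<bar> * (1 + 1))" by (rule opb_smult)
  then show ?thesis unfolding eq by (simp add: mult.commute)
qed

lemma opb_DB: "opb (DB n) (2 * real n)"
proof -
  let ?T = "mat n n (\<lambda>(i,j). if i = sg n j then 1 else 0) :: real mat"
  have eq: "DB n = real n \<cdot>\<^sub>m (1\<^sub>m n - ?T)"
    by (rule eq_matI) (auto simp: DB_index algebra_simps)
  have "opb ?T 1" by (rule perm_opb[OF _ bij_tg]) (auto simp: sg_iff tg_lt sg_tg)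
  then have "opb (1\<^sub>m n - ?T) (1 + 1)" by (intro opb_minus[of _ n] opb_one) auto
  then have "opb (real n \<cdot>\<^sub>m (1\<^sub>m n - ?T)) (\<bar>real n\<bar> * (1 + 1))" by (rule opb_smult)
  then show ?thesis unfolding eq by (simp add: mult.commute)
qed

lemma opb_comm_DF:
  assumes H: "\<And>j. j < n \<Longrightarrow> real n * \<bar>w (sg n j) - w j\<bar> \<le> C" and C: "0 \<le> C"
  shows "opb (comm (DF n) (mat n n (\<lambda>(i,j). if i = j then w i else 0))) C"
  unfolding comm_diag[OF DF_carrier]
proof (rule perm_opb[OF _ bij_sg])
  fix i assume i: "i < n"
  have "\<bar>DF n $$ (i, sg n i) * (w (sg n i) - w i)\<bar> \<le> real n * \<bar>w (sg n i) - w i\<bar>"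
    using i sg_lt[OF i] by (cases "i = sg n i") (auto simp: DF_index abs_mult)
  also have "\<dots> \<le> C" by (rule H[OF i])
  finally show "\<bar>mat n n (\<lambda>(i,j). DF n $$ (i,j) * (w j - w i)) $$ (i, sg n i)\<bar> \<le> C"
    using i sg_lt[OF i] by simp
qed (use C in \<open>auto simp: DF_index\<close>)

lemma opb_comm_DB:
  assumes H: "\<And>j. j < n \<Longrightarrow> real n * \<bar>w (sg n j) - w j\<bar> \<le> C" and C: "0 \<le> C"
  shows "opb (comm (DB n) (mat n n (\<lambda>(i,j). if i = j then w i else 0))) C"
  unfolding comm_diag[OF DB_carrier]
proof (rule perm_opb[OF _ bij_tg])
  fix i assume i: "i < n"
  have t: "tg n i < n" "sg n (tg n i) = i" using i by (auto simp: tg_lt sg_tg)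
  have "\<bar>DB n $$ (i, tg n i) * (w (tg n i) - w i)\<bar> \<le> real n * \<bar>w (sg n (tg n i)) - w (tg n i)\<bar>"
    using i t by (cases "i = tg n i") (auto simp: DB_index abs_mult abs_minus_commute)
  also have "\<dots> \<le> C" by (rule H[OF t(1)])
  finally show "\<bar>mat n n (\<lambda>(i,j). DB n $$ (i,j) * (w j - w i)) $$ (i, tg n i)\<bar> \<le> C"
    using i t by simp
next
  fix i j assume "i < n" "j < n" "j \<noteq> tg n i"
  then show "mat n n (\<lambda>(i,j). DB n $$ (i,j) * (w j - w i)) $$ (i, j) = 0"
    by (auto simp: DB_index sg_iff)
qed (use C in auto)


lemma Dk_comm_bound:
  assumes Y: "Y \<in> carrier_mat n n" and hF: "opb (comm (DF n) Y) C" and hB: "opb (comm (DB n) Y) C"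
    and C: "0 \<le> C" and k: "k \<ge> 1"
  shows "opb (comm (Dk k n) Y) (real k * C * (2 * real n) ^ (k - 1))"
proof -
  define X where "X = 2 * real n"
  have X: "0 \<le> X" unfolding X_def by simp
  have oF: "opb (DF n) X" and oB: "opb (DB n) X" unfolding X_def by (rule opb_DF, rule opb_DB)
  have cF: "comm (DF n) Y \<in> carrier_mat n n" and cB: "comm (DB n) Y \<in> carrier_mat n n"
    using Y by (auto intro: comm_carrier)
  have oD2: "opb (D2 n) (X * X)" unfolding D2_def by (rule opb_mult[OF DB_carrier DF_carrier oB oF X])
  have cD2: "comm (D2 n) Y = DB n * comm (DF n) Y + comm (DB n) Y * DF n"
    unfolding D2_def by (rule comm_mult[OF DB_carrier DF_carrier Y])
  have oc2: "opb (comm (D2 n) Y) (X * C + C * X)" unfolding cD2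
    by (rule opb_add[of _ n]) (auto intro!: opb_mult[of _ n] oB oF hF hB X C cF cB mult_carrier_mat[of _ n n _ n])
  have pw: "opb (D2 n ^\<^sub>m m) (X ^ (2 * m))" for m
  proof (induction m)
    case 0 then show ?case using opb_one by simp
  next
    case (Suc m)
    have "opb (D2 n ^\<^sub>m m * D2 n) (X ^ (2 * m) * (X * X))"
      by (rule opb_mult[of _ n]) (use Suc X oD2 in auto)
    moreover have "X ^ (2 * m) * (X * X) = X ^ (2 * Suc m)" by (simp add: power_add power2_eq_square algebra_simps)
    ultimately show ?case by simp
  qed
  have pwc: "opb (comm (D2 n ^\<^sub>m Suc m) Y) (2 * (real m + 1) * C * X ^ (2 * m + 1))" for m
  proof (induction m)
    case 0
    have "D2 n ^\<^sub>m Suc 0 = D2 n" by simp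
    then show ?case using oc2 by (simp add: algebra_simps)
  next
    case (Suc m)
    define P where "P = D2 n ^\<^sub>m Suc m"
    have cP: "P \<in> carrier_mat n n" unfolding P_def by (rule pow_carrier_mat[OF D2_carrier])
    have PS: "D2 n ^\<^sub>m Suc (Suc m) = P * D2 n" unfolding P_def by (simp only: pow_mat.simps)
    have eq: "comm (D2 n ^\<^sub>m Suc (Suc m)) Y = P * comm (D2 n) Y + comm P Y * D2 n"
      unfolding PS by (rule comm_mult[OF cP D2_carrier Y])
    have XP: "0 \<le> X ^ (2 * Suc m)" using X by simp
    have o1: "opb (P * comm (D2 n) Y) (X ^ (2 * Suc m) * (X * C + C * X))"
      by (rule opb_mult[OF cP comm_carrier[OF D2_carrier Y] _ oc2 XP]) (use pw[of "Suc m"] in \<open>simp add: P_def\<close>)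
    have o2: "opb (comm P Y * D2 n) (2 * (real m + 1) * C * X ^ (2 * m + 1) * (X * X))"
      by (rule opb_mult[OF comm_carrier[OF cP Y] D2_carrier _ oD2]) (use Suc.IH X C in \<open>simp_all add: P_def\<close>)
    have "opb (comm (D2 n ^\<^sub>m Suc (Suc m)) Y)
            (X ^ (2 * Suc m) * (X * C + C * X) + 2 * (real m + 1) * C * X ^ (2 * m + 1) * (X * X))"
      unfolding eq
      by (rule opb_add[OF mult_carrier_mat[OF cP comm_carrier[OF D2_carrier Y]]
            mult_carrier_mat[OF comm_carrier[OF cP Y] D2_carrier] o1 o2])
    moreover have "X ^ (2 * Suc m) * (X * C + C * X) + 2 * (real m + 1) * C * X ^ (2 * m + 1) * (X * X)
        = 2 * (real (Suc m) + 1) * C * X ^ (2 * Suc m + 1)"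
      by (simp add: algebra_simps power_add power2_eq_square)
    ultimately show ?case by simp
  qed
  show ?thesis
  proof (cases "even k")
    case True
    then obtain m where m: "k = 2 * Suc m" using k
      by (metis evenE le_refl mult_0_right not_less_eq_eq not0_implies_Suc One_nat_def)
    have e: "Dk k n = D2 n ^\<^sub>m Suc m" unfolding Dk_def using True m by simp
    have b: "real k * C * (2 * real n) ^ (k - 1) = 2 * (real m + 1) * C * X ^ (2 * m + 1)"
      using m unfolding X_def by simp
    show ?thesis unfolding e b by (rule pwc)
  next
    case False
    then obtain m where m: "k = 2 * m + 1" by (metis oddE)
    have Dk: "Dk k n = DF n * D2 n ^\<^sub>m m" unfolding Dk_def using False m by simp
    show ?thesis
    proof (cases m)
      case 0
      have "Dk k n = DF n" unfolding Dk using 0 D2_carrier[of n] by (simp add: carrier_matD right_mult_one_mat[OF DF_carrier])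
      then show ?thesis using hF m 0 unfolding X_def by simp
    next
      case (Suc m')
      define P where "P = D2 n ^\<^sub>m Suc m'"
      have cP: "P \<in> carrier_mat n n" unfolding P_def by (rule pow_carrier_mat[OF D2_carrier])
      have eq: "comm (Dk k n) Y = DF n * comm P Y + comm (DF n) Y * P"
        unfolding Dk Suc P_def[symmetric] by (rule comm_mult[OF DF_carrier cP Y])
      have o1: "opb (DF n * comm P Y) (X * (2 * (real m' + 1) * C * X ^ (2 * m' + 1)))"
        by (rule opb_mult[OF DF_carrier comm_carrier[OF cP Y] oF _ X]) (use pwc[of m'] in \<open>simp add: P_def\<close>)
      have o2: "opb (comm (DF n) Y * P) (C * X ^ (2 * Suc m'))"
        by (rule opb_mult[OF cF cP hF _ C]) (use pw[of "Suc m'"] in \<open>simp add: P_def\<close>)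
      have "opb (comm (Dk k n) Y) (X * (2 * (real m' + 1) * C * X ^ (2 * m' + 1)) + C * X ^ (2 * Suc m'))"
        unfolding eq
        by (rule opb_add[OF mult_carrier_mat[OF DF_carrier comm_carrier[OF cP Y]] mult_carrier_mat[OF cF cP] o1 o2])
      moreover have "X * (2 * (real m' + 1) * C * X ^ (2 * m' + 1)) + C * X ^ (2 * Suc m')
          = real k * C * X ^ (k - 1)"
        using m Suc by (simp add: algebra_simps power_add power2_eq_square)
      ultimately show ?thesis unfolding X_def by simp
    qed
  qed
qed


lemma lipschitz_Icc:
  fixes y :: "real \<Rightarrow> real"
  assumes sm: "smooth_fun y"
  obtains L where "0 \<le> L" "\<And>s t. a \<le> s \<Longrightarrow> s \<le> t \<Longrightarrow> t \<le> b \<Longrightarrow> \<bar>y t - y s\<bar> \<le> L * (t - s)"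
proof -
  have d0: "y differentiable (at x)" for x using sm unfolding smooth_fun_def
    by (metis funpow_0)
  have d1: "deriv y differentiable (at x)" for x using sm unfolding smooth_fun_def
    by (metis funpow_0 funpow_Suc_right o_apply One_nat_def)
  have cont: "continuous_on {a..b} (deriv y)"
    by (intro continuous_at_imp_continuous_on ballI differentiable_imp_continuous_within d1)
  obtain L0 where L0: "\<forall>x\<in>{a..b}. norm (deriv y x) \<le> L0"
    using compact_imp_bounded[OF compact_continuous_image[OF cont compact_Icc]]
    unfolding bounded_iff by auto
  define L where "L = max L0 0"
  have "\<bar>y t - y s\<bar> \<le> L * (t - s)" if st: "a \<le> s" "s \<le> t" "t \<le> b" for s t
  proof (cases "s = t")
    case True then show ?thesis by simp
  next
    case False
    then have lt: "s < t" using st by simp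
    have "\<exists>z. s < z \<and> z < t \<and> y t - y s = (t - s) * deriv y z"
      by (rule MVT2[OF lt]) (use d0 DERIV_deriv_iff_real_differentiable in blast)
    then obtain z where z: "s < z" "z < t" "y t - y s = (t - s) * deriv y z" by blast
    have "z \<in> {a..b}" using z st by simp
    then have "\<bar>deriv y z\<bar> \<le> L0" using L0 by auto
    then have "\<bar>deriv y z\<bar> \<le> L" unfolding L_def by simp
    then have "\<bar>y t - y s\<bar> \<le> (t - s) * L" using z lt by (simp add: abs_mult mult_left_mono)
    then show ?thesis by (simp add: mult.commute)
  qed
  moreover have "0 \<le> L" unfolding L_def by simp
  ultimately show ?thesis using that by blast
qed

theorem lemma4p5:
  fixes a b :: real and y :: "real \<Rightarrow> real" and k :: nat
  assumes "a < b" and "k \<ge> 1"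
    and "smooth_fun y" and "periodic_fun (b - a) y"
  shows "height_le (\<lambda>N. Dk k N * grid_diag y a b N - grid_diag y a b N * Dk k N) (k - 1)"
proof -
  obtain L where L: "0 \<le> L" "\<And>s t. a \<le> s \<Longrightarrow> s \<le> t \<Longrightarrow> t \<le> b \<Longrightarrow> \<bar>y t - y s\<bar> \<le> L * (t - s)"
    using lipschitz_Icc[OF assms(3)] by blast
  define C where "C = L * (b - a)"
  have C: "0 \<le> C" unfolding C_def using L(1) assms(1) by simp
  define K where "K = real k * C * 2 ^ (k - 1)"
  have bound: "opnorm2 (Dk k N * grid_diag y a b N - grid_diag y a b N * Dk k N) \<le> K * real N ^ (k - 1)
     \<and> 0 \<le> opnorm2 (Dk k N * grid_diag y a b N - grid_diag y a b N * Dk k N)" if N: "N \<ge> 1" for N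
  proof -
    define w where "w i = y (grid_pt a b N i)" for i
    have Y: "grid_diag y a b N = mat N N (\<lambda>(i,j). if i = j then w i else 0)"
      unfolding grid_diag_def w_def by simp
    have H: "real N * \<bar>w (sg N j) - w j\<bar> \<le> C" if j: "j < N" for j
    proof -
      have Npos: "real N > 0" using N by simp
      have ws: "w (sg N j) = y (grid_pt a b N (j + 1))"
      proof (cases "j + 1 < N")
        case True then show ?thesis unfolding w_def sg_def by simp
      next
        case False
        then have "j + 1 = N" using j by simp
        then have "sg N j = 0" unfolding sg_def by simp
        moreover have "grid_pt a b N (j + 1) = a + (b - a)" unfolding grid_pt_def using \<open>j + 1 = N\<close> Npos by simp
        moreover have "y (a + (b - a)) = y a" using assms(4) unfolding periodic_fun_def by blast
        ultimately show ?thesis unfolding w_def by (simp add: grid_pt_def)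
      qed
      have g1: "a \<le> grid_pt a b N j" unfolding grid_pt_def using assms(1) Npos by simp
      have g2: "grid_pt a b N j \<le> grid_pt a b N (j + 1)" unfolding grid_pt_def using assms(1) Npos
        by (simp add: divide_right_mono)
      have "real (j + 1) \<le> real N" using j by simp
      then have "(b - a) * real (j + 1) / real N \<le> (b - a) * real N / real N"
        using assms(1) Npos by (intro divide_right_mono mult_left_mono) auto
      then have g3: "grid_pt a b N (j + 1) \<le> b" unfolding grid_pt_def using Npos by simp
      have diff: "grid_pt a b N (j + 1) - grid_pt a b N j = (b - a) / real N"
        unfolding grid_pt_def using Npos by (simp add: field_simps)
      have "\<bar>w (sg N j) - w j\<bar> \<le> L * ((b - a) / real N)"
        unfolding ws using L(2)[OF g1 g2 g3] diff unfolding w_def by simp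
      then have "real N * \<bar>w (sg N j) - w j\<bar> \<le> real N * (L * ((b - a) / real N))"
        using Npos by (intro mult_left_mono) auto
      also have "\<dots> = C" unfolding C_def using Npos by simp
      finally show ?thesis .
    qed
    have Yc: "grid_diag y a b N \<in> carrier_mat N N" unfolding grid_diag_def by simp
    have o: "opb (comm (Dk k N) (grid_diag y a b N)) (real k * C * (2 * real N) ^ (k - 1))"
      by (rule Dk_comm_bound[OF Yc _ _ C assms(2)]) (unfold Y, (rule opb_comm_DF opb_comm_DB; use H C in auto)+)
    have nn: "0 \<le> real k * C * (2 * real N) ^ (k - 1)" using C by simp
    have eq: "real k * C * (2 * real N) ^ (k - 1) = K * real N ^ (k - 1)"
      unfolding K_def by (simp add: power_mult_distrib)
    show ?thesis using opnorm2_le[OF o nn] opnorm2_nonneg[OF o nn] unfolding comm_def eq by simp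
  qed
  show ?thesis unfolding height_le_def
  proof (rule bigoI[where c=K])
    show "\<forall>\<^sub>F N in at_top. norm (opnorm2 (Dk k N * grid_diag y a b N - grid_diag y a b N * Dk k N))
        \<le> K * norm (real N ^ (k - 1))"
      using eventually_ge_at_top[of "1::nat"]
    proof eventually_elim
      case (elim N)
      then show ?case using bound[OF elim] by simp
    qed
  qed
qed

end
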